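(* In the setting where $M$ has $3$ edges, $p,q\in(0,1]$, $(\omega_e)_{e\in E_\varGamma}$ and $(\omega_{e,j,g})$ are mutually independent Bernoulli variables with means $p$ and $q$ respectively, and $$\widehat C_M=\frac{1}{3pq}\sum_{e\in E_\varGamma}\sum_{j=1}^{3}\sum_{g\in E_j(e)}\omega_e\,\omega_{e,j,g}\,\eta(W_{e,j,g}),$$ the variance satisfies $\mathrm{Var}[\widehat C_M]\le\frac{1-pq}{pq}\,C_M^2$.
   Context: A temporal graph $\varGamma=(V_\varGamma,E_\varGamma)$ consists of a finite vertex set $V_\varGamma$ and a finite sequence $E_\varGamma$ of $m$ temporal edges $(u,v,t)$, $u,v\in V_\varGamma$, $t\in\mathbb{R}^+$, with distinct timestamps. A temporal motif $M$ is an ordered sequence of $l$ directed edges $\langle e'_1=(u'_1,v'_1),\dots,e'_l=(u'_l,v'_l)\rangle$ on a vertex set $V_M$ whose underlying graph is connected; here $l=3$ (and $|V_M|=3$). Fix $\delta\ge0$. A sequence $\langle (w_1,x_1,t_1),\dots,(w_l,x_l,t_l)\rangle$ of edges of $E_\varGamma$ with $t_1<\dots<t_l$ is a $\delta$-instance of $M$ if there is a bijection $f$ from its vertices to $V_M$ with $f(w_i)=u'_i$, $f(x_i)=v'_i$ for all $i$, and $t_l-t_1\le\delta$. $C_M$ is the number of $\delta$-instances of $M$ in $\varGamma$; $\eta_j(e)$ is the number of $\delta$-instances of $M$ whose $j$-th edge is $e$. Wedge data: for each $e\in E_\varGamma$ and $j\in\{1,2,3\}$ there is a finite set $E_j(e)\subseteq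 E_\varGamma$ and for each $g\in E_j(e)$ a nonnegative integer $\eta(W_{e,j,g})$ (the number of $\delta$-instances of $M$ containing the temporal wedge formed by $e$ and $g$, with $e$ mapped to $e'_j$), such that $\sum_{g\in E_j(e)}\eta(W_{e,j,g})=\eta_j(e)$. *)

theory Defs
  imports "HOL-Probability.Probability"
begin

type_synonym 'v tedge = "'v \<times> 'v \<times> real"

definition tsrc :: "'v tedge \<Rightarrow> 'v" where "tsrc e = fst e"
definition tdst :: "'v tedge \<Rightarrow> 'v" where "tdst e = fst (snd e)"
definition ttime :: "'v tedge \<Rightarrow> real" where "ttime e = snd (snd e)"

definition temporal_graph :: "'v set \<Rightarrow> 'v tedge set \<Rightarrow> bool" where
  "temporal_graph V E \<longleftrightarrow> finite V \<and> finite E \<and>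
     (\<forall>e\<in>E. tsrc e \<in> V \<and> tdst e \<in> V \<and> ttime e > 0) \<and> inj_on ttime E"

definition motif_vertices :: "('m \<times> 'm) list \<Rightarrow> 'm set" where
  "motif_vertices Mo = fst ` set Mo \<union> snd ` set Mo"

definition motif_connected :: "('m \<times> 'm) list \<Rightarrow> bool" where
  "motif_connected Mo \<longleftrightarrow>
     (\<forall>a\<in>motif_vertices Mo. \<forall>b\<in>motif_vertices Mo.
        (a, b) \<in> (set Mo \<union> (set Mo)\<inverse>)\<^sup>*)"

definition inst_vertices :: "'v tedge list \<Rightarrow> 'v set" where
  "inst_vertices I = tsrc ` set I \<union> tdst ` set I"

definition delta_instances :: "'v tedge set \<Rightarrow> ('m \<times> 'm) list \<Rightarrow> real \<Rightarrow> 'v tedge list set" where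
  "delta_instances E Mo \<delta> = {I. length I = length Mo \<and> set I \<subseteq> E \<and>
     (\<forall>i. Suc i < length I \<longrightarrow> ttime (I ! i) < ttime (I ! Suc i)) \<and>
     length I > 0 \<and> ttime (last I) - ttime (hd I) \<le> \<delta> \<and>
     (\<exists>f. bij_betw f (inst_vertices I) (motif_vertices Mo) \<and>
        (\<forall>i<length I. f (tsrc (I ! i)) = fst (Mo ! i) \<and> f (tdst (I ! i)) = snd (Mo ! i)))}"

definition motif_count :: "'v tedge set \<Rightarrow> ('m \<times> 'm) list \<Rightarrow> real \<Rightarrow> nat" where
  "motif_count E Mo \<delta> = card (delta_instances E Mo \<delta>)"

text \<open>eta_j(e): number of delta-instances whose j-th edge (j counted from 1) is e.\<close>
definition eta :: "'v tedge set \<Rightarrow> ('m \<times> 'm) list \<Rightarrow> real \<Rightarrow> nat \<Rightarrow> 'v tedge \<Rightarrow> nat" where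
  "eta E Mo \<delta> j e = card {I \<in> delta_instances E Mo \<delta>. I ! (j - 1) = e}"

end

theory Submission
  imports Defs
begin

lemma eta_sum:
  assumes fE: "finite E" and len: "length Mo = 3" and j: "j \<in> {1,2,3::nat}"
  shows "(\<Sum>e\<in>E. real (eta E Mo \<delta> j e)) = real (motif_count E Mo \<delta>)"
proof -
  let ?D = "delta_instances E Mo \<delta>"
  have sub: "?D \<subseteq> {xs. set xs \<subseteq> E \<and> length xs = 3}"
    using len by (auto simp: delta_instances_def)
  have fD: "finite ?D" by (rule finite_subset[OF sub finite_lists_length_eq[OF fE]])
  have img: "(\<lambda>I. I ! (j - 1)) ` ?D \<subseteq> E"
  proof
    fix x assume "x \<in> (\<lambda>I. I ! (j - 1)) ` ?D"
    then obtain I where I: "I \<in> ?D" "x = I ! (j - 1)" by blast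
    have "j - 1 < length I" using I sub j by auto
    then have "x \<in> set I" using I by auto
    then show "x \<in> E" using I sub by auto
  qed
  have "(\<Sum>e\<in>E. eta E Mo \<delta> j e) = (\<Sum>e\<in>E. \<Sum>I\<in>{I. I \<in> ?D \<and> I ! (j - 1) = e}. (1::nat))"
    by (simp add: eta_def)
  also have "\<dots> = (\<Sum>I\<in>?D. 1)" by (rule sum.group[OF fD fE img])
  also have "\<dots> = motif_count E Mo \<delta>" by (simp add: motif_count_def)
  finally show ?thesis by (metis of_nat_sum)
qed

theorem theorem5:
  fixes V :: "'v set" and E :: "'v tedge set" and Mo :: "('m \<times> 'm) list" and \<delta> :: real
    and Ej :: "'v tedge \<Rightarrow> nat \<Rightarrow> 'v tedge set"
    and etaW :: "'v tedge \<Rightarrow> nat \<Rightarrow> 'v tedge \<Rightarrow> nat"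
    and M :: "'a measure" and p q :: real
    and \<omega> :: "'v tedge \<Rightarrow> 'a \<Rightarrow> bool"
    and \<omega>' :: "'v tedge \<times> nat \<times> 'v tedge \<Rightarrow> 'a \<Rightarrow> bool"
  assumes graph: "temporal_graph V E"
    and motif_len: "length Mo = 3"
    and motif_card: "card (motif_vertices Mo) = 3"
    and motif_conn: "motif_connected Mo"
    and delta: "\<delta> \<ge> 0"
    and Ej_sub: "\<And>e j. e \<in> E \<Longrightarrow> j \<in> {1,2,3} \<Longrightarrow> finite (Ej e j) \<and> Ej e j \<subseteq> E"
    and wedge_sum: "\<And>e j. e \<in> E \<Longrightarrow> j \<in> {1,2,3} \<Longrightarrow>
         (\<Sum>g\<in>Ej e j. etaW e j g) = eta E Mo \<delta> j e"
    and p: "0 < p" "p \<le> 1" and q: "0 < q" "q \<le> 1"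
    and P: "prob_space M"
    and indep: "prob_space.indep_vars M (\<lambda>_. count_space UNIV)
         (\<lambda>k. case k of Inl e \<Rightarrow> \<omega> e | Inr w \<Rightarrow> \<omega>' w)
         (Inl ` E \<union> Inr ` {(e, j, g). e \<in> E \<and> j \<in> {1,2,3} \<and> g \<in> Ej e j})"
    and bern_p: "\<And>e. e \<in> E \<Longrightarrow>
         distr M (count_space UNIV) (\<omega> e) = measure_pmf (bernoulli_pmf p)"
    and bern_q: "\<And>e j g. e \<in> E \<Longrightarrow> j \<in> {1,2,3} \<Longrightarrow> g \<in> Ej e j \<Longrightarrow>
         distr M (count_space UNIV) (\<omega>' (e, j, g)) = measure_pmf (bernoulli_pmf q)"
  shows "prob_space.variance M
           (\<lambda>x. 1 / (3 * p * q) * (\<Sum>e\<in>E. \<Sum>j\<in>{1,2,3::nat}. \<Sum>g\<in>Ej e j.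
              of_bool (\<omega> e x) * of_bool (\<omega>' (e, j, g) x) * real (etaW e j g)))
         \<le> (1 - p * q) / (p * q) * (real (motif_count E Mo \<delta>))\<^sup>2"
proof -
  interpret prob_space M by (rule P)
  have fE: "finite E" using graph by (simp add: temporal_graph_def)
  let ?T = "{(e, j, g). e \<in> E \<and> j \<in> {1,2,3::nat} \<and> g \<in> Ej e j}"
  let ?I = "Inl ` E \<union> Inr ` ?T"
  let ?X = "\<lambda>k. case k of Inl e \<Rightarrow> \<omega> e | Inr w \<Rightarrow> \<omega>' w"
  have rv: "\<forall>i\<in>?I. random_variable (count_space UNIV) (?X i)"
    and isets: "indep_sets (\<lambda>i. {?X i -` A \<inter> space M | A. A \<in> sets (count_space UNIV)}) ?I"
    using indep unfolding indep_vars_def2 by auto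
  have mw: "\<omega> e \<in> measurable M (count_space UNIV)" if "e \<in> E" for e
  proof -
    have "Inl e \<in> ?I" using that by blast
    from bspec[OF rv this] show ?thesis by simp
  qed
  have mw': "\<omega>' (e, j, g) \<in> measurable M (count_space UNIV)"
    if "e \<in> E" "j \<in> {1,2,3}" "g \<in> Ej e j" for e j g
  proof -
    have "Inr (e, j, g) \<in> ?I" using that by blast
    from bspec[OF rv this] show ?thesis by simp
  qed
  have bm: "(\<lambda>x. of_bool (f x) :: real) \<in> borel_measurable M"
    if "f \<in> measurable M (count_space UNIV)" for f :: "'a \<Rightarrow> bool"
  proof -
    have "(\<lambda>b::bool. of_bool b :: real) \<in> measurable (count_space UNIV) borel" by simp
    from measurable_compose[OF that this] show ?thesis by (simp add: comp_def)
  qed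
  have pw: "prob (\<omega> e -` {True} \<inter> space M) = p" if "e \<in> E" for e
  proof -
    have "prob (\<omega> e -` {True} \<inter> space M) = measure (distr M (count_space UNIV) (\<omega> e)) {True}"
      by (rule measure_distr[OF mw[OF that], symmetric]) simp
    also have "\<dots> = p" using bern_p[OF that] p by (simp add: measure_pmf_single)
    finally show ?thesis .
  qed
  have pw': "prob (\<omega>' (e, j, g) -` {True} \<inter> space M) = q"
    if "e \<in> E" "j \<in> {1,2,3}" "g \<in> Ej e j" for e j g
  proof -
    have "prob (\<omega>' (e, j, g) -` {True} \<inter> space M)
        = measure (distr M (count_space UNIV) (\<omega>' (e, j, g))) {True}"
      by (rule measure_distr[OF mw'[OF that], symmetric]) simp
    also have "\<dots> = q" using bern_q[OF that] q by (simp add: measure_pmf_single)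
    finally show ?thesis .
  qed
  have pboth: "prob ({x \<in> space M. \<omega> e x \<and> \<omega>' (e, j, g) x}) = p * q"
    if t: "e \<in> E" "j \<in> {1,2,3}" "g \<in> Ej e j" for e j g
  proof -
    define A where "A = (\<lambda>i. ?X i -` {True} \<inter> space M)"
    have J: "{Inl e, Inr (e, j, g)} \<subseteq> ?I" using t by auto
    have "prob (\<Inter>i\<in>{Inl e, Inr (e, j, g)}. A i) = (\<Prod>i\<in>{Inl e, Inr (e, j, g)}. prob (A i))"
      by (rule indep_setsD[OF isets J]) (auto simp: A_def)
    moreover have "(\<Inter>i\<in>{Inl e, Inr (e, j, g)}. A i) = {x \<in> space M. \<omega> e x \<and> \<omega>' (e, j, g) x}"
      by (auto simp: A_def)
    moreover have "(\<Prod>i\<in>{Inl e, Inr (e, j, g)}. prob (A i)) = p * q"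
      using pw[OF t(1)] pw'[OF t] by (simp add: A_def)
    ultimately show ?thesis by simp
  qed
  define Z where "Z = (\<lambda>e j g x. of_bool (\<omega> e x) * of_bool (\<omega>' (e, j, g) x) * real (etaW e j g))"
  define F where "F = (\<lambda>x. \<Sum>e\<in>E. \<Sum>j\<in>{1,2,3::nat}. \<Sum>g\<in>Ej e j. Z e j g x)"
  define S where "S = (\<Sum>e\<in>E. \<Sum>j\<in>{1,2,3::nat}. \<Sum>g\<in>Ej e j. real (etaW e j g))"
  define c where "c = 1 / (3 * p * q)"
  have Zm: "Z e j g \<in> borel_measurable M" if "e \<in> E" "j \<in> {1,2,3}" "g \<in> Ej e j" for e j g
    unfolding Z_def
    by (rule borel_measurable_times[OF borel_measurable_times[OF bm[OF mw[OF that(1)]] bm[OF mw'[OF that]]] borel_measurable_const])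
  have Zint: "integrable M (Z e j g)" if t: "e \<in> E" "j \<in> {1,2,3}" "g \<in> Ej e j" for e j g
    by (rule integrable_const_bound[where B="real (etaW e j g)", OF _ Zm[OF t]]) (auto simp: Z_def)
  have Zexp: "expectation (Z e j g) = p * q * real (etaW e j g)"
    if t: "e \<in> E" "j \<in> {1,2,3}" "g \<in> Ej e j" for e j g
  proof -
    have "expectation (Z e j g) = expectation (\<lambda>x. real (etaW e j g) *
        indicator {x \<in> space M. \<omega> e x \<and> \<omega>' (e, j, g) x} x)"
      by (rule Bochner_Integration.integral_cong[OF refl]) (auto simp: Z_def indicator_def)
    also have "\<dots> = real (etaW e j g) * prob {x \<in> space M. \<omega> e x \<and> \<omega>' (e, j, g) x}"
      by (simp add: Int_absorb2)
    also have "\<dots> = p * q * real (etaW e j g)" using pboth[OF t] by simp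
    finally show ?thesis .
  qed
  have Z01: "0 \<le> Z e j g x \<and> Z e j g x \<le> real (etaW e j g)" for e j g x
    by (auto simp: Z_def)
  have F0: "0 \<le> F x" for x unfolding F_def using Z01 by (intro sum_nonneg) auto
  have FS: "F x \<le> S" for x unfolding F_def S_def using Z01 by (intro sum_mono) auto
  have Fm: "F \<in> borel_measurable M" unfolding F_def
    using Zm by (intro borel_measurable_sum) auto
  have Fint: "integrable M F"
    by (rule integrable_const_bound[where B=S]) (use F0 FS Fm in auto)
  have F2m: "(\<lambda>x. (F x)\<^sup>2) \<in> borel_measurable M" using borel_measurable_times[OF Fm Fm] by (simp add: power2_eq_square)
  have F2int: "integrable M (\<lambda>x. (F x)\<^sup>2)"
  proof (rule integrable_const_bound[where B="S^2"])
    show "AE x in M. norm ((F x)\<^sup>2) \<le> S\<^sup>2"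
      using F0 FS by (auto intro!: power_mono)
  qed (rule F2m)
  have EF: "expectation F = p * q * S"
  proof -
    have i1: "integrable M (\<lambda>x. \<Sum>g\<in>Ej e j. Z e j g x) \<and>
        expectation (\<lambda>x. \<Sum>g\<in>Ej e j. Z e j g x) = (\<Sum>g\<in>Ej e j. expectation (Z e j g))"
      if "e \<in> E" "j \<in> {1,2,3::nat}" for e j
      using Zint[OF that] by (auto intro!: Bochner_Integration.integrable_sum Bochner_Integration.integral_sum)
    have i2: "integrable M (\<lambda>x. \<Sum>j\<in>{1,2,3::nat}. \<Sum>g\<in>Ej e j. Z e j g x) \<and>
        expectation (\<lambda>x. \<Sum>j\<in>{1,2,3::nat}. \<Sum>g\<in>Ej e j. Z e j g x)
         = (\<Sum>j\<in>{1,2,3::nat}. \<Sum>g\<in>Ej e j. expectation (Z e j g))"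
      if "e \<in> E" for e
    proof -
      have a: "integrable M (\<lambda>x. \<Sum>j\<in>{1,2,3::nat}. \<Sum>g\<in>Ej e j. Z e j g x)"
        by (rule Bochner_Integration.integrable_sum) (use i1[OF that] in auto)
      have "expectation (\<lambda>x. \<Sum>j\<in>{1,2,3::nat}. \<Sum>g\<in>Ej e j. Z e j g x)
         = (\<Sum>j\<in>{1,2,3::nat}. expectation (\<lambda>x. \<Sum>g\<in>Ej e j. Z e j g x))"
        by (rule Bochner_Integration.integral_sum) (use i1[OF that] in auto)
      also have "\<dots> = (\<Sum>j\<in>{1,2,3::nat}. \<Sum>g\<in>Ej e j. expectation (Z e j g))"
        using i1[OF that] by (intro sum.cong refl) auto
      finally show ?thesis using a by simp
    qed
    have "expectation F = (\<Sum>e\<in>E. expectation (\<lambda>x. \<Sum>j\<in>{1,2,3::nat}. \<Sum>g\<in>Ej e j. Z e j g x))"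
      unfolding F_def by (rule Bochner_Integration.integral_sum) (use i2 in auto)
    also have "\<dots> = (\<Sum>e\<in>E. \<Sum>j\<in>{1,2,3::nat}. \<Sum>g\<in>Ej e j. expectation (Z e j g))"
      using i2 by (intro sum.cong refl) auto
    finally have "expectation F = (\<Sum>e\<in>E. \<Sum>j\<in>{1,2,3::nat}. \<Sum>g\<in>Ej e j. expectation (Z e j g))" .
    also have "\<dots> = (\<Sum>e\<in>E. \<Sum>j\<in>{1,2,3::nat}. \<Sum>g\<in>Ej e j. p * q * real (etaW e j g))"
      using Zexp by (intro sum.cong refl) auto
    also have "\<dots> = p * q * S" by (simp add: S_def sum_distrib_left distrib_left)
    finally show ?thesis .
  qed
  have EF2: "expectation (\<lambda>x. (F x)\<^sup>2) \<le> S * (p * q * S)"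
  proof -
    have "expectation (\<lambda>x. (F x)\<^sup>2) \<le> expectation (\<lambda>x. S * F x)"
      using F0 FS Fint F2int
      by (intro integral_mono) (auto simp: power2_eq_square intro!: mult_right_mono)
    also have "\<dots> = S * (p * q * S)" using EF by simp
    finally show ?thesis .
  qed
  have VF: "variance F \<le> p * q * (1 - p * q) * S\<^sup>2"
  proof -
    have "variance F = expectation (\<lambda>x. (F x)\<^sup>2) - (expectation F)\<^sup>2"
      by (rule variance_eq[OF Fint F2int])
    also have "\<dots> \<le> S * (p * q * S) - (p * q * S)\<^sup>2" using EF2 EF by simp
    also have "\<dots> = p * q * (1 - p * q) * S\<^sup>2" by (simp add: power2_eq_square algebra_simps)
    finally show ?thesis .
  qed
  have Xeq: "\<And>x. 1 / (3 * p * q) * (\<Sum>e\<in>E. \<Sum>j\<in>{1,2,3::nat}. \<Sum>g\<in>Ej e j.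
              of_bool (\<omega> e x) * of_bool (\<omega>' (e, j, g) x) * real (etaW e j g)) = c * F x"
    by (simp add: c_def F_def Z_def)
  have VX: "variance (\<lambda>x. c * F x) = c\<^sup>2 * variance F"
  proof -
    have "variance (\<lambda>x. c * F x) = expectation (\<lambda>x. c\<^sup>2 * (F x - expectation F)\<^sup>2)"
      by (simp add: power2_eq_square algebra_simps)
    also have "\<dots> = c\<^sup>2 * variance F" by simp
    finally show ?thesis .
  qed
  have S3: "S = 3 * real (motif_count E Mo \<delta>)"
  proof -
    have "S = (\<Sum>e\<in>E. \<Sum>j\<in>{1,2,3::nat}. real (eta E Mo \<delta> j e))"
      unfolding S_def using wedge_sum by (intro sum.cong refl) (metis of_nat_sum)
    also have "\<dots> = (\<Sum>j\<in>{1,2,3::nat}. \<Sum>e\<in>E. real (eta E Mo \<delta> j e))" by (rule sum.swap)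
    also have "\<dots> = (\<Sum>j\<in>{1,2,3::nat}. real (motif_count E Mo \<delta>))"
      using eta_sum[OF fE motif_len] by (intro sum.cong refl) auto
    also have "\<dots> = 3 * real (motif_count E Mo \<delta>)" by simp
    finally show ?thesis .
  qed
  have c0: "0 \<le> c\<^sup>2" by simp
  have "variance (\<lambda>x. c * F x) \<le> c\<^sup>2 * (p * q * (1 - p * q) * S\<^sup>2)"
    unfolding VX by (rule mult_left_mono[OF VF c0])
  also have "\<dots> = (1 - p * q) / (p * q) * (real (motif_count E Mo \<delta>))\<^sup>2"
    using p q unfolding c_def S3 by (simp add: field_simps power2_eq_square)
  finally have "variance (\<lambda>x. c * F x) \<le> (1 - p * q) / (p * q) * (real (motif_count E Mo \<delta>))\<^sup>2" .
  then show ?thesis by (simp only: Xeq)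
qed

end
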